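(* Let $p$ be a prime with $p\equiv 1\pmod 4$ and let $\lambda$ be an integer with $p\nmid\lambda$. Let $a(p):=\#X_\lambda^4(\mathbb F_p)-p^2-1$ be the trace of Frobenius of the Dwork K3 surface $X_\lambda^4$ over $\mathbb F_p$ (with $\lambda$ reduced modulo $p$). Then $$a(p)\equiv \sum_{j=0}^{p-1}\frac{(\tfrac14)_j(\tfrac24)_j(\tfrac34)_j}{j!^3}\,\lambda^{-4j}\pmod p,$$ i.e. $a(p)$ is congruent modulo $p$ to the truncation at $p$ of the period $\pi={}_{3}F_{2}\left(\frac14,\frac24,\frac34;1,1\,\middle|\,\frac{1}{\lambda^4}\right)=\sum_{j\ge0}\frac{(\frac14)_j(\frac24)_j(\frac34)_j}{j!^3}\lambda^{-4j}$ of the surface.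
   Context: $X_\lambda^4$ is the Dwork K3 surface in $\mathbb P^3$ defined by $x_1^4+x_2^4+x_3^4+x_4^4=4\lambda x_1x_2x_3x_4$; $\#X_\lambda^4(\mathbb F_p)$ is its number of $\mathbb F_p$-rational points. $(a)_0=1$ and $(a)_j=a(a+1)\cdots(a+j-1)$. The congruence is in $\mathbb Z_{(p)}$ (the coefficients of the truncated sum are $p$-integral). *)

theory Defs
  imports "HOL-Number_Theory.Number_Theory"
begin

definition nonzero_vecs :: "int \<Rightarrow> (int \<times> int \<times> int \<times> int) set" where
  "nonzero_vecs p = {(x1,x2,x3,x4). x1 \<in> {0..<p} \<and> x2 \<in> {0..<p} \<and> x3 \<in> {0..<p} \<and> x4 \<in> {0..<p}
      \<and> (x1,x2,x3,x4) \<noteq> (0,0,0,0)}"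

definition proj_rel :: "int \<Rightarrow> ((int \<times> int \<times> int \<times> int) \<times> (int \<times> int \<times> int \<times> int)) set" where
  "proj_rel p = {((x1,x2,x3,x4),(y1,y2,y3,y4)).
      (x1,x2,x3,x4) \<in> nonzero_vecs p \<and> (y1,y2,y3,y4) \<in> nonzero_vecs p \<and>
      (\<exists>c\<in>{1..<p}. [y1 = c*x1] (mod p) \<and> [y2 = c*x2] (mod p) \<and> [y3 = c*x3] (mod p) \<and> [y4 = c*x4] (mod p))}"

definition proj_points :: "int \<Rightarrow> (int \<times> int \<times> int \<times> int) set set" where
  "proj_points p = nonzero_vecs p // proj_rel p"

definition dwork_count :: "int \<Rightarrow> int \<Rightarrow> nat" where
  "dwork_count p lam = card {P \<in> proj_points p. \<forall>(x1,x2,x3,x4)\<in>P.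
      [x1^4 + x2^4 + x3^4 + x4^4 = 4*lam*x1*x2*x3*x4] (mod p)}"

text \<open>Congruence modulo p in Z_(p), for rationals.\<close>
definition cong_Zp :: "rat \<Rightarrow> rat \<Rightarrow> int \<Rightarrow> bool" where
  "cong_Zp a b p \<longleftrightarrow> (\<exists>r::rat. a - b = of_int p * r \<and> coprime (snd (quotient_of r)) p)"

end

theory Submission
  imports Defs
begin


definition pint :: "int \<Rightarrow> rat \<Rightarrow> bool" where
  "pint p q \<longleftrightarrow> (\<exists>a b. coprime b p \<and> b \<noteq> 0 \<and> q = of_int a / of_int b)"

lemma pint_int[intro]: "pint p (of_int a)"
  unfolding pint_def by (rule exI[of _ a], rule exI[of _ 1]) simp

lemma pint_add[intro]: assumes "pint p x" "pint p y" shows "pint p (x + y)"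
proof -
  obtain a b where ab: "coprime b p" "b \<noteq> 0" "x = of_int a / of_int b" using assms(1) pint_def by auto
  obtain c d where cd: "coprime d p" "d \<noteq> 0" "y = of_int c / of_int d" using assms(2) pint_def by auto
  show ?thesis unfolding pint_def
    by (rule exI[of _ "a*d + c*b"], rule exI[of _ "b*d"]) (use ab cd in \<open>auto simp: field_simps\<close>)
qed

lemma pint_mult[intro]: assumes "pint p x" "pint p y" shows "pint p (x * y)"
proof -
  obtain a b where ab: "coprime b p" "b \<noteq> 0" "x = of_int a / of_int b" using assms(1) pint_def by auto
  obtain c d where cd: "coprime d p" "d \<noteq> 0" "y = of_int c / of_int d" using assms(2) pint_def by auto
  show ?thesis unfolding pint_def
    by (rule exI[of _ "a*c"], rule exI[of _ "b*d"]) (use ab cd in \<open>auto simp: field_simps\<close>)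
qed

lemma pint_minus[intro]: assumes "pint p x" shows "pint p (- x)"
  using pint_mult[OF pint_int[of p "-1"] assms] by simp

lemma pint_diff[intro]: assumes "pint p x" "pint p y" shows "pint p (x - y)"
  using pint_add[OF assms(1) pint_minus[OF assms(2)]] by simp

lemma pint_0[intro]: "pint p 0" using pint_int[of p 0] by simp
lemma pint_1[intro]: "pint p 1" using pint_int[of p 1] by simp

lemma pint_inv[intro]: assumes "coprime b p" "b \<noteq> 0" shows "pint p (inverse (of_int b))"
  unfolding pint_def by (rule exI[of _ 1], rule exI[of _ b]) (use assms in \<open>auto simp: field_simps\<close>)

lemma pint_div[intro]: assumes "coprime b p" "b \<noteq> 0" shows "pint p (of_int a / of_int b)"
  unfolding pint_def using assms by blast

lemma pint_pow[intro]: assumes "pint p x" shows "pint p (x ^ k)"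
  by (induction k) (use assms in auto)

lemma pint_sum[intro]: assumes "\<And>i. i \<in> A \<Longrightarrow> pint p (f i)" shows "pint p (sum f A)"
  using assms by (induction A rule: infinite_finite_induct) auto

lemma pint_prod[intro]: assumes "\<And>i. i \<in> A \<Longrightarrow> pint p (f i)" shows "pint p (prod f A)"
  using assms by (induction A rule: infinite_finite_induct) auto

lemma pint_of_nat[intro]: "pint p (of_nat k)"
  using pint_int[of p "int k"] by simp

lemma pint_cong_Zp:
  assumes "prime p" "pint p r" "a - b = of_int p * r"
  shows "cong_Zp a b p"
proof -
  obtain u v where uv: "coprime v p" "v \<noteq> 0" "r = of_int u / of_int v" using assms(2) pint_def by auto
  obtain n d where nd: "quotient_of r = (n, d)" by (cases "quotient_of r")
  have r: "r = of_int n / of_int d" using quotient_of_div[OF nd] .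
  have d0: "d > 0" using quotient_of_denom_pos[OF nd] .
  have cop: "coprime n d" using quotient_of_coprime[OF nd] .
  have "of_int u * of_int d = (of_int n * of_int v :: rat)"
    using r uv(3) uv(2) d0 by (simp add: field_simps)
  hence "u * d = n * v" by (metis of_int_eq_iff of_int_mult)
  hence "d dvd n * v" by (metis dvd_triv_right)
  hence "d dvd v" using cop by (metis coprime_commute coprime_dvd_mult_right_iff)
  hence "coprime d p" using uv(1) by (meson coprime_divisors dvd_refl)
  thus ?thesis unfolding cong_Zp_def using assms(3) nd by (intro exI[of _ r]) auto
qed



lemma fermat_int:
  fixes p a :: int
  assumes "prime p" "\<not> p dvd a"
  shows "[a ^ (nat p - 1) = 1] (mod p)"
proof -
  have p1: "p > 1" using assms(1) prime_gt_1_int by blast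
  define q where "q = nat p"
  have pq: "p = int q" using q_def p1 by simp
  have q: "prime q" using assms(1) pq by simp
  define a' where "a' = nat (a mod p)"
  have ia: "int a' = a mod p" using p1 a'_def by simp
  have "\<not> q dvd a'"
  proof
    assume "q dvd a'"
    hence "int q dvd int a'" by (simp only: of_nat_dvd_iff)
    hence "p dvd a mod p" using ia pq by simp
    thus False using assms(2) by (simp add: dvd_mod_iff)
  qed
  hence "[a' ^ (q - 1) = 1] (mod q)" using fermat_theorem[OF q] by simp
  hence "[int (a' ^ (q - 1)) = int 1] (mod int q)" by (simp only: cong_int_iff)
  hence "[(a mod p) ^ (nat p - 1) = 1] (mod p)" using ia pq by simp
  moreover have "[(a mod p) ^ (nat p - 1) = a ^ (nat p - 1)] (mod p)"
    by (intro cong_pow) (simp add: cong_def)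
  ultimately show ?thesis by (meson cong_sym cong_trans)
qed


definition eps :: "int \<Rightarrow> nat \<Rightarrow> int" where
  "eps p e = (if e > 0 \<and> (nat p - 1) dvd e then -1 else 0)"

lemma primroot_int:
  fixes p :: int
  assumes "prime p" "\<not> (nat p - 1) dvd e"
  shows "\<exists>G. coprime G p \<and> \<not> [G ^ e = 1] (mod p)"
proof -
  have p1: "p > 1" using assms(1) prime_gt_1_int by blast
  define q where "q = nat p"
  have pq: "p = int q" using q_def p1 by simp
  have q: "prime q" using assms(1) pq by simp
  obtain g where g: "residue_primroot q g" using prime_primitive_root_exists[OF prime_gt_1_nat[OF q] q] by blast
  have og: "ord q g = q - 1" "coprime q g" using g q by (auto simp: residue_primroot_def totient_prime)
  have "\<not> [g ^ e = 1] (mod q)" using og assms(2) q_def by (simp add: ord_divides')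
  hence "\<not> [int (g ^ e) = int 1] (mod int q)" using cong_int_iff[of "g^e" 1 q] by blast
  hence "\<not> [int g ^ e = 1] (mod p)" using pq by simp
  moreover have "coprime (int g) p" using og(2) pq by (simp add: coprime_commute)
  ultimately show ?thesis by blast
qed

lemma psum:
  fixes p :: int
  assumes p: "prime p"
  shows "[(\<Sum>x\<in>{0..<p}. x^e) = eps p e] (mod p)"
proof -
  have p1: "p > 1" using assms(1) prime_gt_1_int by blast
  show ?thesis
  proof (cases "e = 0")
    case True
    then show ?thesis using p1 by (simp add: eps_def cong_def)
  next
    case e0: False
    show ?thesis
    proof (cases "(nat p - 1) dvd e")
      case True
      then obtain t where t: "e = (nat p - 1) * t" by blast
      have "(\<Sum>x\<in>{0..<p}. x^e) = 0^e + (\<Sum>x\<in>{1..<p}. x^e)"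
      proof -
        have "{0..<p} = insert 0 {1..<p}" using p1 by auto
        thus ?thesis by simp
      qed
      also have "\<dots> = (\<Sum>x\<in>{1..<p}. x^e)" using e0 by simp
      finally have s: "(\<Sum>x\<in>{0..<p}. x^e) = (\<Sum>x\<in>{1..<p}. x^e)" .
      have "[(\<Sum>x\<in>{1..<p}. x^e) = (\<Sum>x\<in>{1..<p}. 1)] (mod p)"
      proof (rule cong_sum)
        fix x assume x: "x \<in> {1..<p}"
        have "\<not> p dvd x" using x by (auto dest: zdvd_imp_le)
        hence "[x ^ (nat p - 1) = 1] (mod p)" using fermat_int[OF p] by blast
        hence "[(x ^ (nat p - 1))^t = 1^t] (mod p)" by (rule cong_pow)
        thus "[x^e = 1] (mod p)" by (simp add: t power_mult)
      qed
      moreover have "(\<Sum>x\<in>{1..<p}. 1::int) = p - 1" using p1 by simp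
      moreover have "[p - 1 = -1] (mod p)" by (simp add: cong_iff_dvd_diff)
      ultimately show ?thesis using s True e0 by (simp add: eps_def) (meson cong_trans)
    next
      case False
      obtain G where G: "coprime G p" "\<not> [G ^ e = 1] (mod p)" using primroot_int[OF p False] by blast
      define I where "I = {0..<p}"
      define h where "h x = (G * x) mod p" for x
      have inj: "inj_on h I"
      proof
        fix x y assume xy: "x \<in> I" "y \<in> I" "h x = h y"
        hence "[G * x = G * y] (mod p)" by (simp add: h_def cong_def)
        hence "[x = y] (mod p)" using G(1) by (metis cong_mult_lcancel coprime_commute)
        thus "x = y" using xy by (simp add: I_def cong_def)
      qed
      have im: "h ` I = I"
        by (rule endo_inj_surj) (use inj p1 in \<open>auto simp: I_def h_def\<close>)
      define S where "S = (\<Sum>x\<in>I. x^e)"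
      have "S = (\<Sum>x\<in>h ` I. x^e)" using im S_def by simp
      also have "\<dots> = (\<Sum>x\<in>I. (h x)^e)" by (rule sum.reindex[OF inj, unfolded comp_def])
      finally have S1: "S = (\<Sum>x\<in>I. (h x)^e)" .
      have "[(\<Sum>x\<in>I. (h x)^e) = (\<Sum>x\<in>I. (G*x)^e)] (mod p)"
        by (intro cong_sum cong_pow) (simp add: h_def cong_def)
      moreover have "(\<Sum>x\<in>I. (G*x)^e) = G^e * S"
        unfolding S_def by (simp add: power_mult_distrib sum_distrib_left)
      ultimately have "[S = G^e * S] (mod p)" using S1 by simp
      hence "p dvd S - G^e * S" by (simp add: cong_iff_dvd_diff)
      hence "p dvd - (S - G^e * S)" by (simp only: dvd_minus_iff)
      hence "p dvd (G^e - 1) * S" by (simp add: algebra_simps)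
      moreover have "\<not> p dvd (G^e - 1)" using G(2) by (simp add: cong_iff_dvd_diff)
      ultimately have "p dvd S" using p by (simp add: prime_dvd_mult_iff)
      thus ?thesis using False by (simp add: eps_def S_def I_def cong_def dvd_eq_mod_eq_0)
    qed
  qed
qed



lemma binom_ext:
  fixes u v :: int
  assumes "m \<le> N"
  shows "(u + v)^m = (\<Sum>k\<le>N. of_nat (m choose k) * u^k * v^(m-k))"
proof -
  have "(u + v)^m = (\<Sum>k\<le>m. of_nat (m choose k) * u^k * v^(m-k))" by (rule binomial_ring)
  also have "\<dots> = (\<Sum>k\<le>N. of_nat (m choose k) * u^k * v^(m-k))"
    by (rule sum.mono_neutral_left) (use assms in auto)
  finally show ?thesis .
qed

lemma expand_pt:
  fixes x1 x2 x3 x4 c :: int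
  shows "(x1^4+x2^4+x3^4+x4^4 - c*x1*x2*x3*x4)^n =
    (\<Sum>b\<le>n. \<Sum>k1\<le>n. \<Sum>k2\<le>n. \<Sum>k3\<le>n.
       of_nat (n choose b) * (-c)^b * of_nat ((n-b) choose k1) * of_nat ((n-b-k1) choose k2)
       * of_nat ((n-b-k1-k2) choose k3)
       * (x1^(b+4*k1) * x2^(b+4*k2) * x3^(b+4*k3) * x4^(b+4*(n-b-k1-k2-k3))))"
proof -
  have neg: "\<And>y b. (- (c * y))^b = (-c)^b * (y::int)^b" by (metis mult_minus_left power_mult_distrib)
  have "(x1^4+x2^4+x3^4+x4^4 - c*x1*x2*x3*x4)^n = ((-c*x1*x2*x3*x4) + (x1^4 + (x2^4 + (x3^4 + x4^4))))^n"
    by (simp add: algebra_simps)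
  also have "\<dots> = (\<Sum>b\<le>n. of_nat (n choose b) * (-c*x1*x2*x3*x4)^b * (x1^4 + (x2^4 + (x3^4 + x4^4)))^(n-b))"
    by (rule binomial_ring)
  also have "\<dots> = (\<Sum>b\<le>n. of_nat (n choose b) * (-c*x1*x2*x3*x4)^b *
      (\<Sum>k1\<le>n. of_nat ((n-b) choose k1) * (x1^4)^k1 *
      (\<Sum>k2\<le>n. of_nat ((n-b-k1) choose k2) * (x2^4)^k2 *
      (\<Sum>k3\<le>n. of_nat ((n-b-k1-k2) choose k3) * (x3^4)^k3 * (x4^4)^(n-b-k1-k2-k3)))))"
    by (simp only: binom_ext[of "_ - _" n] diff_le_self)
  also have "\<dots> = (\<Sum>b\<le>n. \<Sum>k1\<le>n. \<Sum>k2\<le>n. \<Sum>k3\<le>n.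
       of_nat (n choose b) * (-c)^b * of_nat ((n-b) choose k1) * of_nat ((n-b-k1) choose k2)
       * of_nat ((n-b-k1-k2) choose k3)
       * (x1^(b+4*k1) * x2^(b+4*k2) * x3^(b+4*k3) * x4^(b+4*(n-b-k1-k2-k3))))"
    by (simp add: sum_distrib_left sum_distrib_right power_add power_mult[symmetric] power_mult_distrib neg ac_simps)
  finally show ?thesis .
qed

lemma pr2:
  fixes f g :: "_ \<Rightarrow> int"
  shows "(\<Sum>z\<in>A\<times>B. f (fst z) * g (snd z)) = sum f A * sum g B"
  by (simp add: sum_product sum.cartesian_product split_def)

lemma prod4:
  fixes a :: int
  shows "(\<Sum>(x1,x2,x3,x4)\<in>A\<times>A\<times>A\<times>A. a * (g1 x1 * g2 x2 * g3 x3 * g4 x4))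
    = a * (sum g1 A * sum g2 A * sum g3 A * sum g4 A)"
proof -
  define G3 where "G3 w = g3 (fst w) * g4 (snd w)" for w
  define G2 where "G2 y = g2 (fst y) * G3 (snd y)" for y
  have "(\<Sum>(x1,x2,x3,x4)\<in>A\<times>A\<times>A\<times>A. a * (g1 x1 * g2 x2 * g3 x3 * g4 x4))
      = (\<Sum>z\<in>A\<times>A\<times>A\<times>A. a * (g1 (fst z) * G2 (snd z)))"
    by (intro sum.cong refl) (auto simp: G2_def G3_def ac_simps)
  also have "\<dots> = a * (\<Sum>z\<in>A\<times>A\<times>A\<times>A. g1 (fst z) * G2 (snd z))" by (simp add: sum_distrib_left)
  also have "\<dots> = a * (sum g1 A * sum G2 (A\<times>A\<times>A))" by (simp only: pr2)
  also have "sum G2 (A\<times>A\<times>A) = sum g2 A * sum G3 (A\<times>A)" unfolding G2_def by (rule pr2)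
  also have "sum G3 (A\<times>A) = sum g3 A * sum g4 A" unfolding G3_def by (rule pr2)
  finally show ?thesis by (simp add: ac_simps)
qed

definition tm :: "nat \<Rightarrow> int \<Rightarrow> nat \<Rightarrow> nat \<Rightarrow> nat \<Rightarrow> nat \<Rightarrow> int" where
 "tm n c b k1 k2 k3 = of_nat (n choose b) * (-c)^b * of_nat ((n-b) choose k1) * of_nat ((n-b-k1) choose k2) * of_nat ((n-b-k1-k2) choose k3)"

lemma box_sum:
  fixes c :: int and A :: "int set"
  shows "(\<Sum>(x1,x2,x3,x4)\<in>A\<times>A\<times>A\<times>A. (x1^4+x2^4+x3^4+x4^4 - c*x1*x2*x3*x4)^n) =
    (\<Sum>(b,k1,k2,k3)\<in>{..n}\<times>{..n}\<times>{..n}\<times>{..n}. tm n c b k1 k2 k3 *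
      ((\<Sum>x\<in>A. x^(b+4*k1)) * (\<Sum>x\<in>A. x^(b+4*k2)) * (\<Sum>x\<in>A. x^(b+4*k3)) * (\<Sum>x\<in>A. x^(b+4*(n-b-k1-k2-k3)))))"
proof -
  let ?K = "{..n}\<times>{..n}\<times>{..n}\<times>{..n}"
  let ?B = "A\<times>A\<times>A\<times>A"
  define G where "G x t = (case x of (x1,x2,x3,x4) \<Rightarrow> case t of (b,k1,k2,k3) \<Rightarrow> tm n c b k1 k2 k3 *
       (x1^(b+4*k1) * x2^(b+4*k2) * x3^(b+4*k3) * x4^(b+4*(n-b-k1-k2-k3))))" for x :: "int\<times>int\<times>int\<times>int" and t :: "nat\<times>nat\<times>nat\<times>nat"
  have "(\<Sum>(x1,x2,x3,x4)\<in>?B. (x1^4+x2^4+x3^4+x4^4 - c*x1*x2*x3*x4)^n) = (\<Sum>x\<in>?B. \<Sum>t\<in>?K. G x t)"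
    by (intro sum.cong refl) (auto simp: expand_pt sum.cartesian_product tm_def G_def)
  also have "\<dots> = (\<Sum>t\<in>?K. \<Sum>x\<in>?B. G x t)" by (rule sum.swap)
  also have "\<dots> = (\<Sum>(b,k1,k2,k3)\<in>?K. tm n c b k1 k2 k3 *
      ((\<Sum>x\<in>A. x^(b+4*k1)) * (\<Sum>x\<in>A. x^(b+4*k2)) * (\<Sum>x\<in>A. x^(b+4*k3)) * (\<Sum>x\<in>A. x^(b+4*(n-b-k1-k2-k3)))))"
  proof (intro sum.cong refl)
    fix t assume "t \<in> ?K"
    obtain b k1 k2 k3 where t: "t = (b,k1,k2,k3)" by (cases t) auto
    show "(\<Sum>x\<in>?B. G x t) = (case t of (b,k1,k2,k3) \<Rightarrow> tm n c b k1 k2 k3 *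
      ((\<Sum>x\<in>A. x^(b+4*k1)) * (\<Sum>x\<in>A. x^(b+4*k2)) * (\<Sum>x\<in>A. x^(b+4*k3)) * (\<Sum>x\<in>A. x^(b+4*(n-b-k1-k2-k3)))))"
      unfolding t G_def using prod4[of "tm n c b k1 k2 k3" "\<lambda>x. x^(b+4*k1)" "\<lambda>x. x^(b+4*k2)" "\<lambda>x. x^(b+4*k3)" "\<lambda>x. x^(b+4*(n-b-k1-k2-k3))" A]
      by (simp add: case_prod_unfold)
  qed
  finally show ?thesis .
qed



lemma choose_pm1:
  fixes p :: int
  assumes "prime p" "k \<le> nat p - 1"
  shows "[int ((nat p - 1) choose k) = (-1)^k] (mod p)"
  using assms(2)
proof (induction k)
  case 0
  then show ?case by simp
next
  case (Suc k)
  define q where "q = nat p"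
  have p1: "p > 1" using assms(1) prime_gt_1_int by blast
  have pq: "p = int q" using q_def p1 by simp
  have q: "prime q" using assms(1) pq by simp
  have q1: "q > 1" using q prime_gt_1_nat by blast
  have sq: "Suc (q - 1) = q" using q1 by simp
  have pas: "(q - 1 choose Suc k) + (q - 1 choose k) = q choose Suc k"
    using binomial_Suc_Suc[of "q-1" k] sq by simp
  have "q dvd (q choose Suc k)" using Suc.prems q_def q1 by (intro dvd_choose_prime[OF _ _ _ q]) auto
  hence "int q dvd int (q - 1 choose Suc k) + int (q - 1 choose k)"
    using pas by (metis of_nat_add of_nat_dvd_iff)
  hence c1: "[int (q - 1 choose Suc k) = - int (q - 1 choose k)] (mod p)"
    using pq by (simp add: cong_iff_dvd_diff)
  have "[int (q - 1 choose k) = (-1)^k] (mod p)" using Suc q_def by simp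
  hence "[- int (q - 1 choose k) = - ((-1)^k)] (mod p)" by (simp add: cong_minus_minus_iff)
  with c1 have "[int (q - 1 choose Suc k) = - ((-1)^k)] (mod p)" by (rule cong_trans)
  thus ?case using q_def by simp
qed

lemma eval_eps:
  fixes p c :: int
  assumes n: "n = nat p - 1" "n > 0" "4 dvd n"
  shows "(\<Sum>(b,k1,k2,k3)\<in>{..n}\<times>{..n}\<times>{..n}\<times>{..n}. tm n c b k1 k2 k3 *
      (eps p (b+4*k1) * eps p (b+4*k2) * eps p (b+4*k3) * eps p (b+4*(n-b-k1-k2-k3))))
    = (\<Sum>a\<le>n div 4. int (n choose (n-4*a)) * (-c)^(n-4*a) * int ((4*a) choose a) * int ((3*a) choose a) * int ((2*a) choose a))"
proof -
  let ?K = "{..n}\<times>{..n}\<times>{..n}\<times>{..n}"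
  define g where "g t = (case t of (b,k1,k2,k3) \<Rightarrow> tm n c b k1 k2 k3 *
      (eps p (b+4*k1) * eps p (b+4*k2) * eps p (b+4*k3) * eps p (b+4*(n-b-k1-k2-k3))))" for t
  define \<phi> where "\<phi> a = (n-4*a, a, a, a)" for a :: nat
  have zero: "g t = 0" if t: "t \<in> ?K" "t \<notin> \<phi> ` {..n div 4}" for t
  proof (rule ccontr)
    assume nz: "g t \<noteq> 0"
    obtain b k1 k2 k3 where tt: "t = (b,k1,k2,k3)" by (cases t) auto
    have tmnz: "tm n c b k1 k2 k3 \<noteq> 0" and e1: "eps p (b+4*k1) \<noteq> 0" and e2: "eps p (b+4*k2) \<noteq> 0"
      and e3: "eps p (b+4*k3) \<noteq> 0" and e4: "eps p (b+4*(n-b-k1-k2-k3)) \<noteq> 0"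
      using nz by (auto simp: g_def tt)
    have bd: "b \<le> n" "k1 \<le> n - b" "k2 \<le> n-b-k1" "k3 \<le> n-b-k1-k2"
      using tmnz t(1) by (auto simp: tm_def tt binomial_eq_0_iff)
    have ge: "n \<le> e" if "eps p e \<noteq> 0" for e
    proof -
      have "e > 0" "n dvd e" using that n(1) by (auto simp: eps_def split: if_splits)
      thus ?thesis by (simp add: dvd_imp_le)
    qed
    have g1: "n \<le> b+4*k1" "n \<le> b+4*k2" "n \<le> b+4*k3" "n \<le> b+4*(n-b-k1-k2-k3)"
      using ge e1 e2 e3 e4 by blast+
    have "b + 4*k1 = n" "b+4*k2 = n" "b+4*k3 = n" using g1 bd by linarith+
    hence "t = \<phi> k1" "k1 \<le> n div 4" using tt by (auto simp: \<phi>_def)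
    thus False using t(2) by auto
  qed
  have "(\<Sum>t\<in>?K. g t) = (\<Sum>t\<in>\<phi> ` {..n div 4}. g t)"
    by (rule sum.mono_neutral_right) (use zero in \<open>auto simp: \<phi>_def\<close>)
  also have "\<dots> = (\<Sum>a\<le>n div 4. g (\<phi> a))"
    by (rule sum.reindex[unfolded comp_def]) (auto simp: inj_on_def \<phi>_def)
  also have "\<dots> = (\<Sum>a\<le>n div 4. int (n choose (n-4*a)) * (-c)^(n-4*a) * int ((4*a) choose a) * int ((3*a) choose a) * int ((2*a) choose a))"
  proof (intro sum.cong refl)
    fix a assume "a \<in> {..n div 4}"
    hence a: "4*a \<le> n" using n(3) by auto
    have en: "eps p n = -1" using n by (simp add: eps_def)
    have x: "n - 4*a + 4*a = n" "n - (n - 4*a) = 4*a" "4*a - a = 3*a" "3*a-a = 2*a" "2*a - a = a"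
      "n - (n - 4 * a) - a - a - a = a"  using a by auto
    show "g (\<phi> a) = int (n choose (n-4*a)) * (-c)^(n-4*a) * int ((4*a) choose a) * int ((3*a) choose a) * int ((2*a) choose a)"
      unfolding g_def \<phi>_def tm_def using x en by simp
  qed
  finally show ?thesis unfolding g_def .
qed



lemma n_facts:
  fixes p :: int
  assumes "prime p" "[p = 1] (mod 4)"
  shows "nat p - 1 > 0" "4 dvd (nat p - 1)" "int (nat p - 1) = p - 1"
proof -
  have p1: "p > 1" using assms(1) prime_gt_1_int by blast
  show e: "int (nat p - 1) = p - 1" using p1 by simp
  have "4 dvd p - 1" using assms(2) by (simp add: cong_iff_dvd_diff dvd_diff_commute)
  hence "int 4 dvd int (nat p - 1)" using e by simp
  thus "4 dvd (nat p - 1)" by (simp only: of_nat_dvd_iff)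
  have "p \<noteq> 2" using assms(2) by (auto simp: cong_def)
  hence "p > 2" using p1 by simp
  thus "nat p - 1 > 0" by simp
qed

lemma box_cong:
  fixes p c :: int
  assumes p: "prime p" "[p = 1] (mod 4)" and n: "n = nat p - 1"
  shows "[(\<Sum>(x1,x2,x3,x4)\<in>{0..<p}\<times>{0..<p}\<times>{0..<p}\<times>{0..<p}. (x1^4+x2^4+x3^4+x4^4 - c*x1*x2*x3*x4)^n)
     = (\<Sum>a\<le>n div 4. int ((4*a) choose a) * int ((3*a) choose a) * int ((2*a) choose a) * c^(n-4*a))] (mod p)"
proof -
  have nf: "n > 0" "4 dvd n" using n_facts[OF p] n by auto
  let ?K = "{..n}\<times>{..n}\<times>{..n}\<times>{..n}"
  let ?P = "\<lambda>e. \<Sum>x\<in>{0..<p}. x^e"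
  have "[(\<Sum>(x1,x2,x3,x4)\<in>{0..<p}\<times>{0..<p}\<times>{0..<p}\<times>{0..<p}. (x1^4+x2^4+x3^4+x4^4 - c*x1*x2*x3*x4)^n)
     = (\<Sum>(b,k1,k2,k3)\<in>?K. tm n c b k1 k2 k3 *
      (eps p (b+4*k1) * eps p (b+4*k2) * eps p (b+4*k3) * eps p (b+4*(n-b-k1-k2-k3))))] (mod p)"
    unfolding box_sum
  proof (rule cong_sum)
    fix t assume "t \<in> ?K"
    obtain b k1 k2 k3 where tt: "t = (b,k1,k2,k3)" by (cases t) auto
    have "[tm n c b k1 k2 k3 * (?P (b+4*k1) * ?P (b+4*k2) * ?P (b+4*k3) * ?P (b+4*(n-b-k1-k2-k3)))
       = tm n c b k1 k2 k3 * (eps p (b+4*k1) * eps p (b+4*k2) * eps p (b+4*k3) * eps p (b+4*(n-b-k1-k2-k3)))] (mod p)"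
      by (intro cong_mult cong_refl psum p)
    thus "[(case t of (b,k1,k2,k3) \<Rightarrow> tm n c b k1 k2 k3 * (?P (b+4*k1) * ?P (b+4*k2) * ?P (b+4*k3) * ?P (b+4*(n-b-k1-k2-k3))))
       = (case t of (b,k1,k2,k3) \<Rightarrow> tm n c b k1 k2 k3 * (eps p (b+4*k1) * eps p (b+4*k2) * eps p (b+4*k3) * eps p (b+4*(n-b-k1-k2-k3))))] (mod p)"
      using tt by simp
  qed
  also have "(\<Sum>(b,k1,k2,k3)\<in>?K. tm n c b k1 k2 k3 *
      (eps p (b+4*k1) * eps p (b+4*k2) * eps p (b+4*k3) * eps p (b+4*(n-b-k1-k2-k3))))
    = (\<Sum>a\<le>n div 4. int (n choose (n-4*a)) * (-c)^(n-4*a) * int ((4*a) choose a) * int ((3*a) choose a) * int ((2*a) choose a))"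
    by (rule eval_eps[OF n nf])
  also have "[\<dots> = (\<Sum>a\<le>n div 4. int ((4*a) choose a) * int ((3*a) choose a) * int ((2*a) choose a) * c^(n-4*a))] (mod p)"
  proof (rule cong_sum)
    fix a assume "a \<in> {..n div 4}"
    hence a: "4*a \<le> n" using nf by auto
    have ev: "even (n - 4*a)" using nf a by (auto elim!: dvdE)
    have "[int (n choose (n-4*a)) = (-1)^(n-4*a)] (mod p)" using choose_pm1[OF p(1), of "n-4*a"] n by simp
    hence c1: "[int (n choose (n-4*a)) = 1] (mod p)" using ev by simp
    have c2: "(-c)^(n-4*a) = c^(n-4*a)" using ev by simp
    have "[int (n choose (n-4*a)) * ((-c)^(n-4*a) * int ((4*a) choose a) * int ((3*a) choose a) * int ((2*a) choose a))
        = 1 * ((-c)^(n-4*a) * int ((4*a) choose a) * int ((3*a) choose a) * int ((2*a) choose a))] (mod p)"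
      by (intro cong_mult c1 cong_refl)
    thus "[int (n choose (n-4*a)) * (-c)^(n-4*a) * int ((4*a) choose a) * int ((3*a) choose a) * int ((2*a) choose a)
        = int ((4*a) choose a) * int ((3*a) choose a) * int ((2*a) choose a) * c^(n-4*a)] (mod p)"
      using c2 by (simp add: ac_simps)
  qed
  finally show ?thesis .
qed



definition sc :: "int \<Rightarrow> int \<Rightarrow> int\<times>int\<times>int\<times>int \<Rightarrow> int\<times>int\<times>int\<times>int" where
  "sc p c v = (case v of (x1,x2,x3,x4) \<Rightarrow> ((c*x1) mod p, (c*x2) mod p, (c*x3) mod p, (c*x4) mod p))"

lemma mul_nz:
  fixes p x c :: int
  assumes "prime p" "0 \<le> x" "x < p" "x \<noteq> 0" "c \<in> {1..<p}"
  shows "(c*x) mod p \<noteq> 0"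
proof
  assume "(c*x) mod p = 0"
  hence "p dvd c * x" by (simp add: dvd_eq_mod_eq_0)
  hence "p dvd c \<or> p dvd x" using assms(1) by (simp add: prime_dvd_mult_iff)
  thus False using assms by (auto dest: zdvd_imp_le)
qed

lemma mul_cancel:
  fixes p x c d :: int
  assumes "prime p" "0 \<le> x" "x < p" "x \<noteq> 0" "c \<in> {1..<p}" "d \<in> {1..<p}" "(c*x) mod p = (d*x) mod p"
  shows "c = d"
proof -
  have "\<not> p dvd x" using assms by (auto dest: zdvd_imp_le)
  hence cop: "coprime x p" using prime_imp_coprime[OF assms(1)] coprime_commute by blast
  have "[x * c = x * d] (mod p)" using assms(7) by (simp add: cong_def ac_simps)
  hence "[c = d] (mod p)" using cong_mult_lcancel[OF cop] by blast
  thus ?thesis using assms by (simp add: cong_def)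
qed

lemma mem_nzv: "(x1,x2,x3,x4) \<in> nonzero_vecs p \<longleftrightarrow>
   x1 \<in> {0..<p} \<and> x2 \<in> {0..<p} \<and> x3 \<in> {0..<p} \<and> x4 \<in> {0..<p} \<and> (x1 \<noteq> 0 \<or> x2 \<noteq> 0 \<or> x3 \<noteq> 0 \<or> x4 \<noteq> 0)"
  by (auto simp: nonzero_vecs_def)

lemma sc_in:
  assumes "prime p" "x \<in> nonzero_vecs p" "c \<in> {1..<p}"
  shows "sc p c x \<in> nonzero_vecs p"
proof -
  obtain x1 x2 x3 x4 where x: "x = (x1,x2,x3,x4)" by (cases x) auto
  have p0: "p > 0" using assms(1) prime_gt_0_int by blast
  have s: "sc p c x = ((c*x1) mod p, (c*x2) mod p, (c*x3) mod p, (c*x4) mod p)" by (simp add: sc_def x)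
  have r: "x1 \<in> {0..<p}" "x2 \<in> {0..<p}" "x3 \<in> {0..<p}" "x4 \<in> {0..<p}" "x1 \<noteq> 0 \<or> x2 \<noteq> 0 \<or> x3 \<noteq> 0 \<or> x4 \<noteq> 0"
    using assms(2) unfolding x mem_nzv by auto
  have "(c*x1) mod p \<noteq> 0 \<or> (c*x2) mod p \<noteq> 0 \<or> (c*x3) mod p \<noteq> 0 \<or> (c*x4) mod p \<noteq> 0"
  proof -
    have h: "(c*z) mod p \<noteq> 0" if "z \<in> {0..<p}" "z \<noteq> 0" for z
    proof -
      have "0 \<le> z" "z < p" using that(1) by auto
      thus ?thesis by (rule mul_nz[OF assms(1) _ _ that(2) assms(3)])
    qed
    from r(5) show ?thesis
    proof (elim disjE)
      assume "x1 \<noteq> 0" thus ?thesis using h[OF r(1)] by simp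
    next
      assume "x2 \<noteq> 0" thus ?thesis using h[OF r(2)] by simp
    next
      assume "x3 \<noteq> 0" thus ?thesis using h[OF r(3)] by simp
    next
      assume "x4 \<noteq> 0" thus ?thesis using h[OF r(4)] by simp
    qed
  qed
  moreover have "(c*x1) mod p \<in> {0..<p}" "(c*x2) mod p \<in> {0..<p}" "(c*x3) mod p \<in> {0..<p}" "(c*x4) mod p \<in> {0..<p}"
    using p0 by auto
  ultimately show ?thesis unfolding s mem_nzv by blast
qed

lemma rel_iff:
  assumes "prime p"
  shows "(x, y) \<in> proj_rel p \<longleftrightarrow> x \<in> nonzero_vecs p \<and> y \<in> nonzero_vecs p \<and> (\<exists>c\<in>{1..<p}. y = sc p c x)"
proof -
  obtain x1 x2 x3 x4 where x: "x = (x1,x2,x3,x4)" by (cases x) auto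
  obtain y1 y2 y3 y4 where y: "y = (y1,y2,y3,y4)" by (cases y) auto
  have p0: "p > 0" using assms(1) prime_gt_0_int by blast
  have m: "[a = b] (mod p) \<longleftrightarrow> a = b mod p" if "a \<in> {0..<p}" for a b
    using that by (simp add: cong_def)
  have 1: "(x,y) \<in> proj_rel p \<longleftrightarrow> x \<in> nonzero_vecs p \<and> y \<in> nonzero_vecs p \<and>
     (\<exists>c\<in>{1..<p}. [y1 = c*x1] (mod p) \<and> [y2 = c*x2] (mod p) \<and> [y3 = c*x3] (mod p) \<and> [y4 = c*x4] (mod p))"
    unfolding x y proj_rel_def by simp
  have 2: "([y1 = c*x1] (mod p) \<and> [y2 = c*x2] (mod p) \<and> [y3 = c*x3] (mod p) \<and> [y4 = c*x4] (mod p))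
       \<longleftrightarrow> y = sc p c x" if "y \<in> nonzero_vecs p" for c
  proof -
    have r: "y1 \<in> {0..<p}" "y2 \<in> {0..<p}" "y3 \<in> {0..<p}" "y4 \<in> {0..<p}"
      using that unfolding y mem_nzv by auto
    show ?thesis using m[OF r(1)] m[OF r(2)] m[OF r(3)] m[OF r(4)] by (simp add: x y sc_def)
  qed
  show ?thesis using 1 2 by blast
qed

lemma sc_id: assumes "x \<in> nonzero_vecs p" shows "sc p 1 x = x"
proof -
  obtain x1 x2 x3 x4 where x: "x = (x1,x2,x3,x4)" by (cases x) auto
  show ?thesis using assms unfolding x sc_def mem_nzv by auto
qed

lemma sc_comp:
  "sc p d (sc p c x) = sc p ((d*c) mod p) x"
proof -
  obtain x1 x2 x3 x4 where x: "x = (x1,x2,x3,x4)" by (cases x) auto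
  show ?thesis unfolding x sc_def by (simp add: mod_mult_right_eq mod_mult_left_eq mult.assoc)
qed

lemma prod_in:
  fixes p c d :: int
  assumes "prime p" "c \<in> {1..<p}" "d \<in> {1..<p}"
  shows "(d*c) mod p \<in> {1..<p}"
proof -
  have p0: "p > 0" using assms(1) prime_gt_0_int by blast
  have "(d*c) mod p \<noteq> 0" using mul_nz[OF assms(1), of c d] assms by auto
  moreover have "(d*c) mod p \<ge> 0" "(d*c) mod p < p" using p0 by auto
  ultimately show ?thesis by auto
qed

lemma inv_in:
  fixes p c :: int
  assumes "prime p" "c \<in> {1..<p}"
  shows "\<exists>d\<in>{1..<p}. (d*c) mod p = 1"
proof -
  have p1: "p > 1" using assms(1) prime_gt_1_int by blast
  have "\<not> p dvd c" using assms by (auto dest: zdvd_imp_le)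
  hence "coprime c p" using prime_imp_coprime[OF assms(1)] coprime_commute by blast
  then obtain d where d: "[c * d = 1] (mod p)" using cong_solve_coprime_int by blast
  have "(c * (d mod p)) mod p = 1" using d p1 by (simp add: cong_def mod_mult_right_eq)
  moreover hence "d mod p \<noteq> 0" by auto
  moreover have "d mod p \<ge> 0" "d mod p < p" using p1 by auto
  ultimately show ?thesis by (intro bexI[of _ "d mod p"]) (auto simp: ac_simps)
qed

lemma equiv_rel: assumes "prime p" shows "equiv (nonzero_vecs p) (proj_rel p)"
proof (rule equivI)
  show "proj_rel p \<subseteq> nonzero_vecs p \<times> nonzero_vecs p" using rel_iff[OF assms] by auto
  show "refl_on (nonzero_vecs p) (proj_rel p)"
  proof (rule refl_onI)
    fix x assume x: "x \<in> nonzero_vecs p"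
    have "1 \<in> {1..<p}" using assms prime_gt_1_int by auto
    thus "(x, x) \<in> proj_rel p" using rel_iff[OF assms] sc_id[OF x] x by metis
  qed
  show "sym (proj_rel p)"
  proof (rule symI)
    fix x y assume "(x,y) \<in> proj_rel p"
    then obtain c where c: "c \<in> {1..<p}" "y = sc p c x" "x \<in> nonzero_vecs p" "y \<in> nonzero_vecs p"
      using rel_iff[OF assms] by blast
    obtain d where d: "d \<in> {1..<p}" "(d*c) mod p = 1" using inv_in[OF assms c(1)] by blast
    have "sc p d y = x" using c d sc_comp sc_id by metis
    thus "(y,x) \<in> proj_rel p" using rel_iff[OF assms] c d by blast
  qed
  show "trans (proj_rel p)"
  proof (rule transI)
    fix x y z assume "(x,y) \<in> proj_rel p" "(y,z) \<in> proj_rel p"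
    then obtain c d where "c \<in> {1..<p}" "y = sc p c x" "x \<in> nonzero_vecs p" "d \<in> {1..<p}" "z = sc p d y"
      "z \<in> nonzero_vecs p" using rel_iff[OF assms] by blast
    thus "(x,z) \<in> proj_rel p" using rel_iff[OF assms] sc_comp prod_in[OF assms] by metis
  qed
qed

lemma class_eq:
  assumes "prime p" "x \<in> nonzero_vecs p"
  shows "proj_rel p `` {x} = (\<lambda>c. sc p c x) ` {1..<p}"
proof (rule equalityI; rule subsetI)
  fix y assume "y \<in> proj_rel p `` {x}"
  thus "y \<in> (\<lambda>c. sc p c x) ` {1..<p}" using rel_iff[OF assms(1)] by blast
next
  fix y assume "y \<in> (\<lambda>c. sc p c x) ` {1..<p}"
  then obtain c where c: "c \<in> {1..<p}" "y = sc p c x" by blast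
  have "(x, y) \<in> proj_rel p" unfolding rel_iff[OF assms(1)] using c sc_in[OF assms(1) assms(2) c(1)] assms(2) by blast
  thus "y \<in> proj_rel p `` {x}" by blast
qed

lemma class_card:
  assumes "prime p" "x \<in> nonzero_vecs p"
  shows "card (proj_rel p `` {x}) = nat p - 1"
proof -
  obtain x1 x2 x3 x4 where x: "x = (x1,x2,x3,x4)" by (cases x) auto
  have "inj_on (\<lambda>c. sc p c x) {1..<p}"
  proof
    fix c d assume cd: "c \<in> {1..<p}" "d \<in> {1..<p}" "sc p c x = sc p d x"
    hence e: "(c*x1) mod p = (d*x1) mod p" "(c*x2) mod p = (d*x2) mod p"
      "(c*x3) mod p = (d*x3) mod p" "(c*x4) mod p = (d*x4) mod p" by (auto simp: x sc_def)
    show "c = d" using assms(2) unfolding x mem_nzv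
      using mul_cancel[OF assms(1) _ _ _ cd(1,2)] e by auto
  qed
  hence "card ((\<lambda>c. sc p c x) ` {1..<p}) = card {1..<p}" by (rule card_image)
  thus ?thesis using class_eq[OF assms] by simp
qed



definition pr :: "int \<Rightarrow> int \<Rightarrow> int\<times>int\<times>int\<times>int \<Rightarrow> bool" where
  "pr p lam v = (case v of (x1,x2,x3,x4) \<Rightarrow> [x1^4 + x2^4 + x3^4 + x4^4 = 4*lam*x1*x2*x3*x4] (mod p))"

lemma pr_sc:
  fixes p lam :: int
  assumes p: "prime p" and c: "c \<in> {1..<p}"
  shows "pr p lam (sc p c v) \<longleftrightarrow> pr p lam v"
proof -
  obtain x1 x2 x3 x4 where v: "v = (x1,x2,x3,x4)" by (cases v) auto
  define F where "F y1 y2 y3 y4 = y1^4 + y2^4 + y3^4 + y4^4 - 4*lam*y1*y2*y3*y4" for y1 y2 y3 y4 :: int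
  have e: "[(c*x1) mod p = c*x1] (mod p)" "[(c*x2) mod p = c*x2] (mod p)"
      "[(c*x3) mod p = c*x3] (mod p)" "[(c*x4) mod p = c*x4] (mod p)" by (simp_all add: cong_def)
  have "[F ((c*x1) mod p) ((c*x2) mod p) ((c*x3) mod p) ((c*x4) mod p) = F (c*x1) (c*x2) (c*x3) (c*x4)] (mod p)"
    unfolding F_def by (intro cong_add cong_diff cong_mult cong_pow cong_refl e)
  moreover have "F (c*x1) (c*x2) (c*x3) (c*x4) = c^4 * F x1 x2 x3 x4" unfolding F_def by (simp add: algebra_simps power_mult_distrib eval_nat_numeral)
  ultimately have cg: "[F ((c*x1) mod p) ((c*x2) mod p) ((c*x3) mod p) ((c*x4) mod p) = c^4 * F x1 x2 x3 x4] (mod p)" by simp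
  have "\<not> p dvd c" using c by (auto dest: zdvd_imp_le)
  hence nc: "\<not> p dvd c^4" using p by (simp add: prime_dvd_power_iff)
  have "pr p lam (sc p c v) \<longleftrightarrow> p dvd F ((c*x1) mod p) ((c*x2) mod p) ((c*x3) mod p) ((c*x4) mod p)"
    by (simp add: pr_def sc_def v F_def cong_iff_dvd_diff)
  also have "\<dots> \<longleftrightarrow> p dvd c^4 * F x1 x2 x3 x4" using cg by (simp add: cong_dvd_iff)
  also have "\<dots> \<longleftrightarrow> p dvd F x1 x2 x3 x4" using nc p by (simp add: prime_dvd_mult_iff)
  also have "\<dots> \<longleftrightarrow> pr p lam v" by (simp add: pr_def v F_def cong_iff_dvd_diff)
  finally show ?thesis .
qed

lemma finite_nzv: "finite (nonzero_vecs p)"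
proof -
  have "nonzero_vecs p \<subseteq> {0..<p}\<times>{0..<p}\<times>{0..<p}\<times>{0..<p}" by (auto simp: nonzero_vecs_def)
  thus ?thesis by (rule finite_subset) auto
qed

lemma count_sol:
  fixes p lam :: int
  assumes p: "prime p"
  shows "card {v \<in> nonzero_vecs p. pr p lam v} = (nat p - 1) * dwork_count p lam"
proof -
  let ?V = "nonzero_vecs p" and ?R = "proj_rel p"
  define C where "C = {P \<in> ?V // ?R. \<forall>v\<in>P. pr p lam v}"
  have eq: "equiv ?V ?R" by (rule equiv_rel[OF p])
  have D: "dwork_count p lam = card C"
    unfolding dwork_count_def proj_points_def C_def pr_def by simp
  have mem: "v \<in> ?R `` {v}" if "v \<in> ?V" for v
  proof -
    have "(v,v) \<in> ?R" using eq that by (meson equivE refl_onD)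
    thus ?thesis by simp
  qed
  have U: "{v \<in> ?V. pr p lam v} = \<Union>C"
  proof (rule equalityI; rule subsetI)
    fix v assume v: "v \<in> {v \<in> ?V. pr p lam v}"
    have "\<forall>w\<in>?R``{v}. pr p lam w"
    proof
      fix w assume "w \<in> ?R``{v}"
      moreover have "?R``{v} = (\<lambda>c. sc p c v) ` {1..<p}" using class_eq[OF p] v by blast
      ultimately obtain c where "c \<in> {1..<p}" "w = sc p c v" by auto
      thus "pr p lam w" using pr_sc[OF p] v by auto
    qed
    hence "?R``{v} \<in> C" unfolding C_def using v by (auto intro: quotientI)
    thus "v \<in> \<Union>C" using mem v by blast
  next
    fix v assume "v \<in> \<Union>C"
    then obtain P where P: "P \<in> C" "v \<in> P" by blast
    have "P \<subseteq> ?V" using P(1) eq unfolding C_def by (auto dest: in_quotient_imp_subset)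
    thus "v \<in> {v \<in> ?V. pr p lam v}" using P unfolding C_def by auto
  qed
  have fin: "finite P" if "P \<in> C" for P
    using that eq finite_nzv unfolding C_def by (auto dest: in_quotient_imp_subset intro: finite_subset)
  have dis: "pairwise disjnt C"
    unfolding pairwise_def disjnt_def C_def using quotient_disj[OF eq] by blast
  have cP: "card P = nat p - 1" if "P \<in> C" for P
  proof -
    have "P \<in> ?V // ?R" using that unfolding C_def by blast
    then obtain x where "P = ?R``{x}" "x \<in> ?V" by (rule quotientE)
    thus ?thesis using class_card[OF p] by simp
  qed
  have "card {v \<in> ?V. pr p lam v} = sum card C" unfolding U by (rule card_Union_disjoint[OF dis fin])
  also have "\<dots> = sum (\<lambda>_. nat p - 1) C" using cP by simp
  also have "\<dots> = (nat p - 1) * card C" by simp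
  finally show ?thesis using D by simp
qed



lemma int_cong:
  fixes p lam :: int
  assumes p: "prime p" "[p = 1] (mod 4)" and n: "n = nat p - 1"
  shows "[int (dwork_count p lam) - p^2 - 1 =
     (\<Sum>a\<le>n div 4. int ((4*a) choose a) * int ((3*a) choose a) * int ((2*a) choose a) * (4*lam)^(n-4*a))] (mod p)"
proof -
  have p1: "p > 1" using p(1) prime_gt_1_int by blast
  have nf: "n > 0" "int n = p - 1" using n_facts[OF p] n by auto
  define B where "B = {0..<p}\<times>{0..<p}\<times>{0..<p}\<times>{0..<p}"
  define G where "G = (\<lambda>(x1,x2,x3,x4). (x1^4+x2^4+x3^4+x4^4 - (4*lam)*x1*x2*x3*x4)^n)"
  define T2 where "T2 = (\<Sum>a\<le>n div 4. int ((4*a) choose a) * int ((3*a) choose a) * int ((2*a) choose a) * (4*lam)^(n-4*a))"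
  let ?Sol = "{v \<in> nonzero_vecs p. pr p lam v}"
  let ?S = "{v \<in> B. pr p lam v}"
  have finB: "finite B" unfolding B_def by auto
  have h1: "?S = insert (0,0,0,0) ?Sol"
    unfolding B_def using p1 by (auto simp: nonzero_vecs_def pr_def)
  have z: "(0,0,0,0) \<notin> ?Sol" by (simp add: nonzero_vecs_def)
  have fs: "finite ?Sol" using finite_nzv by auto
  have hc: "int (card ?S) = (p - 1) * int (dwork_count p lam) + 1"
    using h1 z fs count_sol[OF p(1), of lam] nf n by simp
  have "int (card ?S) = (\<Sum>v\<in>?S. 1)" by simp
  also have "\<dots> = (\<Sum>v\<in>B. if pr p lam v then 1 else 0)" by (rule sum.inter_filter[OF finB])
  finally have h2: "int (card ?S) = (\<Sum>v\<in>B. if pr p lam v then 1 else 0)" .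
  have h3: "[(\<Sum>v\<in>B. if pr p lam v then 1 else 0) = (\<Sum>v\<in>B. 1 - G v)] (mod p)"
  proof (rule cong_sum)
    fix v assume "v \<in> B"
    obtain x1 x2 x3 x4 where v: "v = (x1,x2,x3,x4)" by (cases v) auto
    define F where "F = x1^4+x2^4+x3^4+x4^4 - (4*lam)*x1*x2*x3*x4"
    have Gv: "G v = F^n" by (simp add: G_def F_def v)
    have pv: "pr p lam v \<longleftrightarrow> p dvd F" by (simp add: pr_def v F_def cong_iff_dvd_diff)
    show "[(if pr p lam v then 1 else 0) = 1 - G v] (mod p)"
    proof (cases "p dvd F")
      case True
      have "F^n = F * F^(n-1)" using nf(1) by (cases n) auto
      hence "p dvd F^n" using True by simp
      thus ?thesis using True pv Gv by (simp add: cong_iff_dvd_diff)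
    next
      case False
      hence "[F^n = 1] (mod p)" using fermat_int[OF p(1)] n by simp
      hence "p dvd F^n - 1" by (simp add: cong_iff_dvd_diff)
      thus ?thesis using False pv Gv by (simp add: cong_iff_dvd_diff)
    qed
  qed
  have cB: "int (card B) = p^4" unfolding B_def using p1 by (simp add: card_cartesian_product eval_nat_numeral)
  have h4: "(\<Sum>v\<in>B. 1 - G v) = p^4 - sum G B" using cB by (simp add: sum_subtractf)
  have h5: "[sum G B = T2] (mod p)" unfolding G_def B_def T2_def by (rule box_cong[OF p n])
  have "[(p - 1) * int (dwork_count p lam) + 1 = p^4 - T2] (mod p)"
    using h2 h3 h4 h5 hc by (metis cong_diff cong_refl cong_trans)
  hence "p dvd ((p - 1) * int (dwork_count p lam) + 1) - (p^4 - T2)" by (simp add: cong_iff_dvd_diff)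
  moreover have "p dvd p * int (dwork_count p lam) - p^4 - p^2" by (simp add: power2_eq_square eval_nat_numeral)
  ultimately have "p dvd (p * int (dwork_count p lam) - p^4 - p^2) - (((p - 1) * int (dwork_count p lam) + 1) - (p^4 - T2))"
    by (rule dvd_diff[rotated])
  hence "p dvd (int (dwork_count p lam) - p^2 - 1) - T2" by (simp add: algebra_simps)
  thus ?thesis unfolding T2_def by (simp add: cong_iff_dvd_diff)
qed



lemma poch3:
  "pochhammer (1/4::rat) j * pochhammer (2/4) j * pochhammer (3/4) j * 256^j * fact j = fact (4*j)"
proof (induction j)
  case 0
  then show ?case by simp
next
  case (Suc j)
  have f: "fact (4 * Suc j) = (fact (4*j) :: rat) * of_nat (4*j+1) * of_nat (4*j+2) * of_nat (4*j+3) * of_nat (4*j+4)"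
  proof -
    have "4 * Suc j = Suc (Suc (Suc (Suc (4*j))))" by simp
    hence "fact (4 * Suc j) = (fact (Suc (Suc (Suc (Suc (4*j))))) :: rat)" by (simp only:)
    also have "\<dots> = fact (4*j) * of_nat (4*j+1) * of_nat (4*j+2) * of_nat (4*j+3) * of_nat (4*j+4)"
      by (simp only: fact_Suc of_nat_mult) (simp add: algebra_simps)
    finally show ?thesis .
  qed
  have "pochhammer (1/4::rat) (Suc j) * pochhammer (2/4) (Suc j) * pochhammer (3/4) (Suc j) * 256^(Suc j) * fact (Suc j)
     = (pochhammer (1/4::rat) j * pochhammer (2/4) j * pochhammer (3/4) j * 256^j * fact j)
       * ((1/4 + of_nat j) * (2/4 + of_nat j) * (3/4 + of_nat j) * 256 * (of_nat j + 1))"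
    by (simp add: pochhammer_Suc fact_Suc algebra_simps)
  also have "\<dots> = fact (4*j) * ((1/4 + of_nat j) * (2/4 + of_nat j) * (3/4 + of_nat j) * 256 * (of_nat j + 1))"
    using Suc.IH by simp
  also have "\<dots> = fact (4 * Suc j)" unfolding f by (simp add: field_simps)
  finally show ?case .
qed

lemma M_fact:
  "((4*j) choose j) * ((3*j) choose j) * ((2*j) choose j) * fact j ^ 4 = (fact (4*j) :: nat)"
proof -
  have a: "fact j * fact (3*j) * ((4*j) choose j) = (fact (4*j) :: nat)"
    using binomial_fact_lemma[of j "4*j"] by simp
  have b: "fact j * fact (2*j) * ((3*j) choose j) = (fact (3*j) :: nat)"
    using binomial_fact_lemma[of j "3*j"] by simp
  have c: "fact j * fact j * ((2*j) choose j) = (fact (2*j) :: nat)"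
    using binomial_fact_lemma[of j "2*j"] by simp
  have "fact (4*j) = fact j * fact (3*j) * ((4*j) choose j)" using a by simp
  also have "\<dots> = fact j * (fact j * fact (2*j) * ((3*j) choose j)) * ((4*j) choose j)" by (simp only: b)
  also have "\<dots> = fact j * (fact j * (fact j * fact j * ((2*j) choose j)) * ((3*j) choose j)) * ((4*j) choose j)" by (simp only: c)
  finally show ?thesis by (simp add: eval_nat_numeral ac_simps)
qed

lemma h_eq:
  "pochhammer (1/4::rat) j * pochhammer (2/4) j * pochhammer (3/4) j / (fact j)^3
    = of_nat (((4*j) choose j) * ((3*j) choose j) * ((2*j) choose j)) / 256^j"
proof -
  have f0: "(fact j :: rat) \<noteq> 0" by simp
  have "of_nat (((4*j) choose j) * ((3*j) choose j) * ((2*j) choose j)) * (fact j :: rat)^4 = fact (4*j)"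
  proof -
    have "(of_nat (((4*j) choose j) * ((3*j) choose j) * ((2*j) choose j) * fact j ^ 4) :: rat) = of_nat (fact (4*j))"
      by (simp only: M_fact)
    thus ?thesis by (simp only: of_nat_mult of_nat_power of_nat_fact)
  qed
  hence e: "(pochhammer (1/4::rat) j * pochhammer (2/4) j * pochhammer (3/4) j * 256^j) * fact j
      = (of_nat (((4*j) choose j) * ((3*j) choose j) * ((2*j) choose j)) * (fact j)^3) * fact j"
    using poch3[of j] by (simp add: eval_nat_numeral ac_simps)
  have "pochhammer (1/4::rat) j * pochhammer (2/4) j * pochhammer (3/4) j * 256^j
      = of_nat (((4*j) choose j) * ((3*j) choose j) * ((2*j) choose j)) * (fact j)^3"
    using mult_right_cancel[OF f0] e by blast
  thus ?thesis using f0 by (simp add: field_simps)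
qed



lemma pint_divide[intro]: assumes "pint p x" "coprime b p" "b \<noteq> 0" shows "pint p (x / of_int b)"
  using pint_mult[OF assms(1) pint_inv[OF assms(2,3)]] by (simp add: divide_inverse)

lemma pint_poch[intro]: assumes "pint p x" shows "pint p (pochhammer x k)"
  by (induction k) (use assms in \<open>auto simp: pochhammer_Suc\<close>)

lemma coprime_fact:
  fixes p :: int
  assumes "prime p" "j < nat p"
  shows "coprime (fact j :: int) p"
proof -
  have p1: "p > 1" using assms(1) prime_gt_1_int by blast
  define q where "q = nat p"
  have pq: "p = int q" using q_def p1 by simp
  have q: "prime q" using assms(1) pq by simp
  have "\<not> q dvd fact j" using prime_dvd_fact_iff[OF q] assms(2) q_def by simp
  hence "\<not> int q dvd int (fact j)" by (simp only: of_nat_dvd_iff not_False_eq_True)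
  hence "\<not> p dvd fact j" using pq by (simp add: of_nat_fact)
  thus ?thesis using prime_imp_coprime[OF assms(1)] coprime_commute by blast
qed

lemma coprime_small:
  fixes p :: int
  assumes "prime p" "[p = 1] (mod 4)" "b \<in> {1,2,4}"
  shows "coprime b p"
proof -
  have p1: "p > 1" using assms(1) prime_gt_1_int by blast
  have "p mod 4 = 1" using assms(2) by (simp add: cong_def)
  hence p5: "p \<ge> 5" using p1 by presburger
  have "\<not> p dvd b" using assms(3) p5 by (auto dest: zdvd_imp_le)
  thus ?thesis using prime_imp_coprime[OF assms(1)] coprime_commute by blast
qed

definition tmq :: "int \<Rightarrow> nat \<Rightarrow> rat" where
  "tmq lam j = pochhammer (1/4::rat) j * pochhammer (2/4) j * pochhammer (3/4) j
               / (fact j)^3 * (inverse (of_int lam))^(4*j)"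

lemma pint_frac:
  fixes p :: int
  assumes "prime p" "[p = 1] (mod 4)"
  shows "pint p (1/4)" "pint p (2/4)" "pint p (3/4)"
proof -
  have c: "coprime 4 p" using coprime_small[OF assms, of 4] by simp
  show "pint p (1/4)" using pint_div[OF c, of 1] by simp
  show "pint p (2/4)" using pint_div[OF c, of 2] by simp
  show "pint p (3/4)" using pint_div[OF c, of 3] by simp
qed

lemma tail_term:
  fixes p lam :: int
  assumes p: "prime p" "[p = 1] (mod 4)" and lam: "\<not> p dvd lam" and n: "n = nat p - 1"
    and j: "n div 4 < j" "j < nat p"
  shows "\<exists>r. pint p r \<and> tmq lam j = of_int p * r"
proof -
  have p1: "p > 1" using p(1) prime_gt_1_int by blast
  have nf: "n > 0" "4 dvd n" "int n = p - 1" using n_facts[OF p] n by auto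
  define m where "m = n div 4"
  have nm: "n = 4*m" using nf(2) m_def by auto
  have pm: "of_int p = (4 * of_nat m + 1 :: rat)"
  proof -
    have "p = 4 * int m + 1" using nf(3) nm by simp
    thus ?thesis by simp
  qed
  define k where "k = j - m - 1"
  have jk: "j = m + Suc k" using j(1) k_def m_def by simp
  have "pochhammer (1/4::rat) j = pochhammer (1/4) m * pochhammer (1/4 + of_nat m) (Suc k)"
    unfolding jk by (rule pochhammer_product')
  also have "pochhammer (1/4 + of_nat m :: rat) (Suc k) = (1/4 + of_nat m) * pochhammer (1/4 + of_nat m + 1) k"
    by (rule pochhammer_rec)
  finally have P1: "pochhammer (1/4::rat) j = pochhammer (1/4) m * ((1/4 + of_nat m) * pochhammer (1/4 + of_nat m + 1) k)" .
  have q: "1/4 + of_nat m = of_int p * (1/4 :: rat)" using pm by simp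
  define r where "r = (pochhammer (1/4::rat) m * (1/4) * pochhammer (1/4 + of_nat m + 1) k)
      * pochhammer (2/4) j * pochhammer (3/4) j * inverse (of_int ((fact j)^3)) * inverse (of_int (lam^(4*j)))"
  have ab: "A*((P*(1/4))*B)*C*D / F * G = P * ((A*(1/4)*B)*C*D*inverse F * G)" for A B C D F G P :: rat
  proof -
    have "A*((P*(1/4))*B)*C*D / F * G = A*((P*(1/4))*B)*C*D * inverse F * G" by (simp only: divide_inverse)
    also have "\<dots> = P * ((A*(1/4)*B)*C*D*inverse F * G)" by (simp only: mult_ac)
    finally show ?thesis .
  qed
  have e1: "inverse (of_int ((fact j)^3)) = inverse ((fact j :: rat)^3)" by (simp add: of_int_fact)
  have e2: "inverse (of_int (lam^(4*j))) = (inverse (of_int lam :: rat))^(4*j)" by (simp add: power_inverse)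
  have "tmq lam j = of_int p * r"
    unfolding tmq_def r_def e1 e2 P1 q by (rule ab)
  moreover have "pint p r"
  proof -
    have cf: "coprime ((fact j)^3) p" using coprime_fact[OF p(1) j(2)] by simp
    have fz: "(fact j :: int)^3 \<noteq> 0" by simp
    have cl: "coprime lam p" using lam prime_imp_coprime[OF p(1)] coprime_commute by blast
    hence cl': "coprime (lam^(4*j)) p" by simp
    have lz: "lam^(4*j) \<noteq> 0" using lam by auto
    have f: "pint p (1/4)" "pint p (2/4)" "pint p (3/4)" using pint_frac[OF p] by auto
    show ?thesis unfolding r_def
      by (intro pint_mult pint_poch pint_add pint_inv cf fz cl' lz f pint_of_nat pint_1)
  qed
  ultimately show ?thesis by blast
qed



lemma head_term:
  fixes p lam q :: int and X :: rat
  assumes lz: "lam \<noteq> 0" and a: "4*j \<le> n" and q: "(4*lam)^n - 1 = p * q"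
  shows "X * of_int ((4*lam)^(n-4*j)) - X / 256^j * (inverse (of_int lam))^(4*j)
     = of_int p * (X * of_int q / of_int (256^j * lam^(4*j)))"
proof -
  define L where "L = (of_int lam :: rat)"
  have L0: "L \<noteq> 0" using lz L_def by simp
  define D where "D = (256::rat)^j * L^(4*j)"
  have D0: "D \<noteq> 0" using L0 D_def by simp
  have Dd: "of_int (256^j * lam^(4*j)) = D" by (simp add: D_def L_def)
  define E where "E = (4*L)^(n-4*j)"
  have "(4*L)^n = (4*L)^((n-4*j) + 4*j)" using a by simp
  also have "\<dots> = (4*L)^(n-4*j) * (4*L)^(4*j)" by (rule power_add)
  also have "(4*L)^(4*j) = D" unfolding D_def by (simp add: power_mult_distrib power_mult)
  finally have ED: "(4*L)^n = E * D" unfolding E_def .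
  have qq: "of_int p * of_int q = (4*L)^n - (1::rat)"
  proof -
    have "(of_int ((4*lam)^n - 1) :: rat) = of_int (p*q)" using q by simp
    thus ?thesis by (simp add: L_def)
  qed
  have i: "X / 256^j * (inverse L)^(4*j) = X / D" unfolding D_def by (simp add: power_inverse field_simps)
  have "X * of_int ((4*lam)^(n-4*j)) - X / 256^j * (inverse (of_int lam))^(4*j) = X * E - X / D"
    using i by (simp add: E_def L_def)
  also have "\<dots> = X * (E * D - 1) / D" using D0 by (simp add: field_simps)
  also have "E * D - 1 = of_int p * of_int q" using qq ED by simp
  also have "X * (of_int p * of_int q) / D = of_int p * (X * of_int q / D)" using D0 by (simp add: field_simps)
  finally show ?thesis using Dd by simp
qed

lemma head_sum:
  fixes p lam :: int
  assumes p: "prime p" "[p = 1] (mod 4)" and lam: "\<not> p dvd lam" and n: "n = nat p - 1"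
  shows "\<exists>R. pint p R \<and>
    of_int (\<Sum>a\<le>n div 4. int ((4*a) choose a) * int ((3*a) choose a) * int ((2*a) choose a) * (4*lam)^(n-4*a))
     - (\<Sum>j\<le>n div 4. tmq lam j) = of_int p * R"
proof -
  have "\<not> p dvd 4" using coprime_small[OF p, of 4] p(1) by (metis coprime_commute insertCI not_coprimeI dvd_refl not_prime_unit)
  hence "\<not> p dvd 4*lam" using lam p(1) by (simp add: prime_dvd_mult_iff)
  hence "[(4*lam)^(nat p - 1) = 1] (mod p)" by (rule fermat_int[OF p(1)])
  hence "p dvd (4*lam)^n - 1" using n by (simp add: cong_iff_dvd_diff)
  then obtain q where q: "(4*lam)^n - 1 = p * q" by (elim dvdE)
  have lz: "lam \<noteq> 0" using lam by auto
  have cl: "coprime lam p" using lam prime_imp_coprime[OF p(1)] coprime_commute by blast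
  have c2: "coprime 2 p" using coprime_small[OF p, of 2] by simp
  have cD: "coprime (256^j * lam^(4*j)) p" for j
  proof -
    have "(256::int)^j = 2^(8*j)" by (simp add: power_mult)
    thus ?thesis using c2 cl by simp
  qed
  have nD: "256^j * lam^(4*j) \<noteq> 0" for j using lz by simp
  define R where "R = (\<Sum>j\<le>n div 4. of_int (int ((4*j) choose j) * int ((3*j) choose j) * int ((2*j) choose j)) * of_int q / of_int (256^j * lam^(4*j)) :: rat)"
  have "pint p R" unfolding R_def
    by (intro pint_sum pint_divide pint_mult pint_int cD nD)
  moreover have "of_int (\<Sum>a\<le>n div 4. int ((4*a) choose a) * int ((3*a) choose a) * int ((2*a) choose a) * (4*lam)^(n-4*a))
     - (\<Sum>j\<le>n div 4. tmq lam j) = of_int p * R"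
  proof -
    have "of_int (\<Sum>a\<le>n div 4. int ((4*a) choose a) * int ((3*a) choose a) * int ((2*a) choose a) * (4*lam)^(n-4*a))
     - (\<Sum>j\<le>n div 4. tmq lam j) = (\<Sum>j\<le>n div 4. of_int (int ((4*j) choose j) * int ((3*j) choose j) * int ((2*j) choose j)) * of_int ((4*lam)^(n-4*j)) - tmq lam j)"
      by (simp add: sum_subtractf)
    also have "\<dots> = (\<Sum>j\<le>n div 4. of_int p * (of_int (int ((4*j) choose j) * int ((3*j) choose j) * int ((2*j) choose j)) * of_int q / of_int (256^j * lam^(4*j))))"
    proof (intro sum.cong refl)
      fix j assume "j \<in> {..n div 4}"
      hence a: "4*j \<le> n" by auto
      have t: "tmq lam j = of_int (int ((4*j) choose j) * int ((3*j) choose j) * int ((2*j) choose j)) / 256^j * (inverse (of_int lam))^(4*j)"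
        unfolding tmq_def h_eq by simp
      show "of_int (int ((4*j) choose j) * int ((3*j) choose j) * int ((2*j) choose j)) * of_int ((4*lam)^(n-4*j)) - tmq lam j
        = of_int p * (of_int (int ((4*j) choose j) * int ((3*j) choose j) * int ((2*j) choose j)) * of_int q / of_int (256^j * lam^(4*j)))"
        unfolding t by (rule head_term[OF lz a q])
    qed
    also have "\<dots> = of_int p * R" unfolding R_def by (simp add: sum_distrib_left)
    finally show ?thesis .
  qed
  ultimately show ?thesis by blast
qed



theorem theorem4:
  fixes p lam :: int
  assumes "prime p" and "[p = 1] (mod 4)" and "\<not> p dvd lam"
  shows "cong_Zp (of_int (int (dwork_count p lam) - p^2 - 1))
           (\<Sum>j\<in>{0..<nat p}. pochhammer (1/4::rat) j * pochhammer (2/4) j * pochhammer (3/4) j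
               / (fact j)^3 * (inverse (of_int lam))^(4*j)) p"
proof -
  note p = assms(1,2) and lam = assms(3)
  define n where "n = nat p - 1"
  define m where "m = n div 4"
  define A where "A = int (dwork_count p lam) - p^2 - 1"
  define T2 where "T2 = (\<Sum>a\<le>n div 4. int ((4*a) choose a) * int ((3*a) choose a) * int ((2*a) choose a) * (4*lam)^(n-4*a))"
  have p1: "p > 1" using p(1) prime_gt_1_int by blast
  have "[A = T2] (mod p)" unfolding A_def T2_def by (rule int_cong[OF p n_def])
  hence "p dvd A - T2" by (simp add: cong_iff_dvd_diff)
  then obtain k where k: "A - T2 = p * k" by (elim dvdE)
  obtain R1 where R1: "pint p R1" "of_int T2 - (\<Sum>j\<le>m. tmq lam j) = of_int p * R1"
    using head_sum[OF p lam n_def] unfolding T2_def m_def by blast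
  have "\<forall>j\<in>{Suc m..<nat p}. \<exists>r. pint p r \<and> tmq lam j = of_int p * r"
    using tail_term[OF p lam n_def] m_def by auto
  then obtain f where f: "\<forall>j\<in>{Suc m..<nat p}. pint p (f j) \<and> tmq lam j = of_int p * f j"
    by (metis bchoice)
  define R2 where "R2 = (\<Sum>j\<in>{Suc m..<nat p}. f j)"
  have R2: "pint p R2" "(\<Sum>j\<in>{Suc m..<nat p}. tmq lam j) = of_int p * R2"
    unfolding R2_def using f by (auto simp: sum_distrib_left intro!: pint_sum)
  have mle: "Suc m \<le> nat p" unfolding m_def n_def using p1 by auto
  have split: "(\<Sum>j\<in>{0..<nat p}. tmq lam j) = (\<Sum>j\<le>m. tmq lam j) + (\<Sum>j\<in>{Suc m..<nat p}. tmq lam j)"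
  proof -
    have "(\<Sum>j\<in>{0..<nat p}. tmq lam j) = (\<Sum>j\<in>{0..<Suc m}. tmq lam j) + (\<Sum>j\<in>{Suc m..<nat p}. tmq lam j)"
      using sum.atLeastLessThan_concat[of 0 "Suc m" "nat p" "tmq lam"] mle by simp
    also have "{0..<Suc m} = {..m}" by auto
    finally show ?thesis .
  qed
  have S: "(\<Sum>j\<in>{0..<nat p}. pochhammer (1/4::rat) j * pochhammer (2/4) j * pochhammer (3/4) j
               / (fact j)^3 * (inverse (of_int lam))^(4*j)) = (\<Sum>j\<in>{0..<nat p}. tmq lam j)"
    unfolding tmq_def by (rule refl)
  have "of_int A - (\<Sum>j\<in>{0..<nat p}. tmq lam j) = of_int (A - T2) + (of_int T2 - (\<Sum>j\<le>m. tmq lam j)) - (\<Sum>j\<in>{Suc m..<nat p}. tmq lam j)"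
    using split by simp
  also have "\<dots> = of_int p * (of_int k + R1 - R2)" using k R1(2) R2(2) by (simp add: algebra_simps)
  finally have eq: "of_int A - (\<Sum>j\<in>{0..<nat p}. tmq lam j) = of_int p * (of_int k + R1 - R2)" .
  have "pint p (of_int k + R1 - R2)" using R1(1) R2(1) by blast
  from pint_cong_Zp[OF p(1) this eq] show ?thesis unfolding S A_def .
qed


end
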